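(* Consider the evolution equation for a probability density $f(\mathbf{y},t)$, $$\frac{\partial f(\mathbf{y})}{\partial t}=\gamma\Big(\mathbb{M}\big(h^{+}(\cdot,[f])\,f\big)(\mathbf{y})-h^{-}(\mathbf{y},[f])\,f(\mathbf{y})\Big),\qquad \gamma>0,$$ where the mutations are non-positive Gibbs mutations, i.e. the mutation kernel is $$f_{\zeta}(\mathbf{y},\mathbf{y}^{\circ})=\frac{f_{0}(\mathbf{y})\,\Psi(\mathbf{y},\mathbf{y}^{\circ})}{h_{0}^{+}(\mathbf{y}^{\circ})}\,H(\mathbf{y}^{\circ},\mathbf{y}),\qquad h_{0}^{+}(\mathbf{y}^{\circ})=h^{+}(\mathbf{y}^{\circ},[f_{0}]),$$ for a fixed positive probability density $f_0$. The competition relation may be transitive or intransitive, and mixing may be preferential or non-preferential. Then the total entropy $$S([f])=-\int f(\mathbf{y})\ln\!\Big(\frac{f(\mathbf{y})}{f_{0}(\mathbf{y})}\Big)\,d\mathbf{y}+C_{0}([f_0])$$ (with $C_0$ depending only on $f_0$) monotonically increases, $dS/dt\ge 0$, during the evolution of the system until it reaches its maximal value at the equilibrium $f=f_0$.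
   Context: States $\mathbf{y}$ range over a property space with measure $d\mathbf{y}$. A competition relation on states is given: for any two states exactly one of $\mathbf{y}\prec\mathbf{y}'$, $\mathbf{y}\simeq\mathbf{y}'$, $\mathbf{y}\succ\mathbf{y}'$ holds, with $\mathbf{y}\prec\mathbf{y}'$ iff $\mathbf{y}'\succ\mathbf{y}$ and $\simeq$ symmetric (no transitivity is assumed). The generalised Heaviside function is $H(\mathbf{y},\mathbf{y}')=0$ if $\mathbf{y}\prec\mathbf{y}'$, $=1/2$ if $\mathbf{y}\simeq\mathbf{y}'$, $=1$ if $\mathbf{y}\succ\mathbf{y}'$, so $H(\mathbf{y},\mathbf{y}')=1-H(\mathbf{y}',\mathbf{y})$. The mixing preference function $\Psi(\mathbf{y},\mathbf{y}')\in[0,1]$ gives the probability weight of selecting a pair for competition ($\Psi\equiv1$ for non-preferential mixing). Winning and losing capacities: $h^{+}(\mathbf{y},[f])=\int\Psi(\mathbf{y},\mathbf{y}')H(\mathbf{y},\mathbf{y}')f(\mathbf{y}')\,d\mathbf{y}'$, $h^{-}(\mathbf{y},[f])=\int\Psi(\mathbf{y},\mathbf{y}')H(\mathbf{y}',\mathbf{y})f(\mathbf{y}')\,d\mathbf{y}'$. The mutation operator is $\mathbb{M}(g)(\mathbf{y})=\int f_{\zeta}(\mathbf{y},\mathbf{y}^{\circ})g(\mathbf{y}^{\circ})\,d\mathbf{y}^{\circ}$, where $f_\zeta(\cdot,\mathbf{y}^\circ)$ is the normalised distribution of mutations originating at $\mathbf{y}^\circ$; "non-positive" means mutations from $\mathbf{y}^\circ$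 land only at states $\mathbf{y}\preccurlyeq\mathbf{y}^\circ$. *)

theory Defs
  imports "HOL-Analysis.Analysis"
begin

text \<open>Competition relation: lt y y' encodes y \<prec> y'. y \<succ> y' is lt y' y, and
  y \<simeq> y' means neither holds. Asymmetry of lt (assumed in the theorem) gives
  the required trichotomy; no transitivity is assumed.\<close>

definition Hv :: "('a \<Rightarrow> 'a \<Rightarrow> bool) \<Rightarrow> 'a \<Rightarrow> 'a \<Rightarrow> real" where
  "Hv lt y y' = (if lt y y' then 0 else if lt y' y then 1 else 1/2)"

definition hplus :: "'a measure \<Rightarrow> ('a \<Rightarrow> 'a \<Rightarrow> real) \<Rightarrow> ('a \<Rightarrow> 'a \<Rightarrow> bool)
    \<Rightarrow> ('a \<Rightarrow> real) \<Rightarrow> 'a \<Rightarrow> real" where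
  "hplus M \<Psi> lt f y = (\<integral>y'. \<Psi> y y' * Hv lt y y' * f y' \<partial>M)"

definition hminus :: "'a measure \<Rightarrow> ('a \<Rightarrow> 'a \<Rightarrow> real) \<Rightarrow> ('a \<Rightarrow> 'a \<Rightarrow> bool)
    \<Rightarrow> ('a \<Rightarrow> real) \<Rightarrow> 'a \<Rightarrow> real" where
  "hminus M \<Psi> lt f y = (\<integral>y'. \<Psi> y y' * Hv lt y' y * f y' \<partial>M)"

text \<open>Mutation operator with kernel K y y\<degree> (distribution of mutations from y\<degree> to y).\<close>
definition mutation :: "'a measure \<Rightarrow> ('a \<Rightarrow> 'a \<Rightarrow> real) \<Rightarrow> ('a \<Rightarrow> real) \<Rightarrow> 'a \<Rightarrow> real" where
  "mutation M K g y = (\<integral>yo. K y yo * g yo \<partial>M)"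

definition gibbs_kernel :: "'a measure \<Rightarrow> ('a \<Rightarrow> 'a \<Rightarrow> real) \<Rightarrow> ('a \<Rightarrow> 'a \<Rightarrow> bool)
    \<Rightarrow> ('a \<Rightarrow> real) \<Rightarrow> 'a \<Rightarrow> 'a \<Rightarrow> real" where
  "gibbs_kernel M \<Psi> lt f0 y yo = f0 y * \<Psi> y yo / hplus M \<Psi> lt f0 yo * Hv lt yo y"

definition evol_rhs :: "'a measure \<Rightarrow> ('a \<Rightarrow> 'a \<Rightarrow> real) \<Rightarrow> ('a \<Rightarrow> 'a \<Rightarrow> bool)
    \<Rightarrow> ('a \<Rightarrow> real) \<Rightarrow> real \<Rightarrow> ('a \<Rightarrow> real) \<Rightarrow> 'a \<Rightarrow> real" where
  "evol_rhs M \<Psi> lt f0 \<gamma> f y =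
     \<gamma> * (mutation M (gibbs_kernel M \<Psi> lt f0) (\<lambda>yo. hplus M \<Psi> lt f yo * f yo) y
          - hminus M \<Psi> lt f y * f y)"

definition entropy :: "'a measure \<Rightarrow> ('a \<Rightarrow> real) \<Rightarrow> real \<Rightarrow> ('a \<Rightarrow> real) \<Rightarrow> real" where
  "entropy M f0 C0 f = - (\<integral>y. f y * ln (f y / f0 y) \<partial>M) + C0"

definition prob_density :: "'a measure \<Rightarrow> ('a \<Rightarrow> real) \<Rightarrow> bool" where
  "prob_density M f \<longleftrightarrow> f \<in> borel_measurable M \<and> (\<forall>y\<in>space M. 0 \<le> f y)
     \<and> integrable M f \<and> (\<integral>y. f y \<partial>M) = 1"

end

theory Submission
  imports Defs
begin

lemma Hv_range: "0 \<le> Hv lt a b" "Hv lt a b \<le> 1"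
  by (auto simp: Hv_def)

lemma integrable_cong_imp:
  fixes f g :: "'a \<Rightarrow> real"
  shows "integrable M g \<Longrightarrow> (\<And>x. x \<in> space M \<Longrightarrow> f x = g x) \<Longrightarrow> integrable M f"
  using Bochner_Integration.integrable_cong[of M M f g] by simp

lemma cheb:
  fixes q u :: "'a \<Rightarrow> real" and M :: "'a measure"
  assumes q_nn: "\<And>y. y \<in> space M \<Longrightarrow> 0 \<le> q y" and u_pos: "\<And>y. y \<in> space M \<Longrightarrow> 0 < u y"
    and i1: "integrable M q" and i2: "integrable M (\<lambda>y. q y * u y)"
    and i3: "integrable M (\<lambda>y. q y * (ln (u y) + 1))"
    and i4: "integrable M (\<lambda>y. q y * u y * (ln (u y) + 1))"
    and e1: "(\<integral>y. q y \<partial>M) = h" and e2: "(\<integral>y. q y * u y \<partial>M) = m * h" and m: "0 < m"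
  shows "m * (\<integral>y. q y * (ln (u y) + 1) \<partial>M) \<le> (\<integral>y. q y * u y * (ln (u y) + 1) \<partial>M)"
proof -
  have "0 \<le> (\<integral>y. q y * u y * (ln (u y) + 1) - m * (q y * (ln (u y) + 1))
             - (ln m + 1) * (q y * u y) + (m * (ln m + 1)) * q y \<partial>M)"
  proof (intro Bochner_Integration.integral_nonneg)
    fix y assume y: "y \<in> space M"
    have "0 \<le> (u y - m) * (ln (u y) - ln m)"
    proof (cases "u y \<le> m")
      case True
      then have "ln (u y) \<le> ln m" using u_pos[OF y] m by simp
      then show ?thesis using True by (intro mult_nonpos_nonpos) auto
    next
      case False
      then have "ln m \<le> ln (u y)" using u_pos[OF y] m by simp
      then show ?thesis using False by (intro mult_nonneg_nonneg) auto
    qed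
    then have "0 \<le> q y * ((u y - m) * (ln (u y) - ln m))" using q_nn[OF y] by simp
    also have "q y * ((u y - m) * (ln (u y) - ln m)) = q y * u y * (ln (u y) + 1) - m * (q y * (ln (u y) + 1))
             - (ln m + 1) * (q y * u y) + (m * (ln m + 1)) * q y"
      by (simp add: algebra_simps)
    finally show "0 \<le> q y * u y * (ln (u y) + 1) - m * (q y * (ln (u y) + 1))
             - (ln m + 1) * (q y * u y) + (m * (ln m + 1)) * q y" .
  qed
  also have "\<dots> = (\<integral>y. q y * u y * (ln (u y) + 1) \<partial>M) - m * (\<integral>y. q y * (ln (u y) + 1) \<partial>M)
             - (ln m + 1) * (\<integral>y. q y * u y \<partial>M) + (m * (ln m + 1)) * (\<integral>y. q y \<partial>M)"
    using i1 i2 i3 i4 by simp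
  also have "\<dots> = (\<integral>y. q y * u y * (ln (u y) + 1) \<partial>M) - m * (\<integral>y. q y * (ln (u y) + 1) \<partial>M)"
    unfolding e1 e2 by (simp add: algebra_simps)
  finally show ?thesis by simp
qed

locale gset =
  fixes M :: "'a measure" and lt :: "'a \<Rightarrow> 'a \<Rightarrow> bool" and \<Psi> :: "'a \<Rightarrow> 'a \<Rightarrow> real"
    and f0 :: "'a \<Rightarrow> real"
  assumes sfin: "sigma_finite_measure M"
    and lt_meas: "{p \<in> space (M \<Otimes>\<^sub>M M). lt (fst p) (snd p)} \<in> sets (M \<Otimes>\<^sub>M M)"
    and Psi_meas: "(\<lambda>p. \<Psi> (fst p) (snd p)) \<in> borel_measurable (M \<Otimes>\<^sub>M M)"
    and Psi_range: "\<And>y y'. y \<in> space M \<Longrightarrow> y' \<in> space M \<Longrightarrow> 0 \<le> \<Psi> y y' \<and> \<Psi> y y' \<le> 1"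
    and Psi_sym: "\<And>y y'. y \<in> space M \<Longrightarrow> y' \<in> space M \<Longrightarrow> \<Psi> y y' = \<Psi> y' y"
    and f0_dens: "prob_density M f0"
    and f0_pos: "\<And>y. y \<in> space M \<Longrightarrow> 0 < f0 y"
    and h0_pos: "\<And>y. y \<in> space M \<Longrightarrow> 0 < hplus M \<Psi> lt f0 y"
begin

sublocale sigma_finite_measure M by (rule sfin)
interpretation P: pair_sigma_finite M M
  by (simp add: pair_sigma_finite_def sfin)

lemma lt_pred: "Measurable.pred (M \<Otimes>\<^sub>M M) (\<lambda>p. lt (fst p) (snd p))"
  unfolding pred_def by (rule lt_meas)

lemma lt_pred2: "Measurable.pred (M \<Otimes>\<^sub>M M) (\<lambda>p. lt (snd p) (fst p))"
proof -
  have "(\<lambda>p. (snd p, fst p)) \<in> measurable (M \<Otimes>\<^sub>M M) (M \<Otimes>\<^sub>M M)" by measurable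
  from measurable_sets[OF this lt_meas]
  have "(\<lambda>p. (snd p, fst p)) -` {p \<in> space (M \<Otimes>\<^sub>M M). lt (fst p) (snd p)} \<inter> space (M \<Otimes>\<^sub>M M) \<in> sets (M \<Otimes>\<^sub>M M)" .
  moreover have "(\<lambda>p. (snd p, fst p)) -` {p \<in> space (M \<Otimes>\<^sub>M M). lt (fst p) (snd p)} \<inter> space (M \<Otimes>\<^sub>M M)
     = {p \<in> space (M \<Otimes>\<^sub>M M). lt (snd p) (fst p)}"
    by (auto simp: space_pair_measure)
  ultimately show ?thesis unfolding pred_def by simp
qed

lemma Hv_prod: "(\<lambda>p. Hv lt (fst p) (snd p)) \<in> borel_measurable (M \<Otimes>\<^sub>M M)"
  unfolding Hv_def using lt_pred lt_pred2 by (intro measurable_If) auto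

lemma Hv_meas[measurable (raw)]:
  assumes "f \<in> measurable N M" "g \<in> measurable N M"
  shows "(\<lambda>x. Hv lt (f x) (g x)) \<in> borel_measurable N"
  using measurable_compose[OF measurable_Pair[OF assms] Hv_prod] by simp

lemma Psi_meas'[measurable (raw)]:
  assumes "f \<in> measurable N M" "g \<in> measurable N M"
  shows "(\<lambda>x. \<Psi> (f x) (g x)) \<in> borel_measurable N"
  using measurable_compose[OF measurable_Pair[OF assms] Psi_meas] by simp

lemma f0_meas[measurable]: "f0 \<in> borel_measurable M"
  using f0_dens by (simp add: prob_density_def)

lemma hplus_meas[measurable]: assumes [measurable]: "f \<in> borel_measurable M" shows "hplus M \<Psi> lt f \<in> borel_measurable M"
  unfolding hplus_def[abs_def] by measurable

lemma hminus_meas[measurable]: assumes [measurable]: "f \<in> borel_measurable M" shows "hminus M \<Psi> lt f \<in> borel_measurable M"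
  unfolding hminus_def[abs_def] by measurable


lemma integrable_bmult:
  fixes g \<phi> :: "'a \<Rightarrow> real"
  assumes "integrable M g" "\<phi> \<in> borel_measurable M" "\<And>y. y \<in> space M \<Longrightarrow> \<bar>\<phi> y\<bar> \<le> B"
  shows "integrable M (\<lambda>y. \<phi> y * g y)"
proof (rule Bochner_Integration.integrable_bound[where f="\<lambda>y. B * g y"])
  show "integrable M (\<lambda>y. B * g y)" using assms(1) by simp
  show "(\<lambda>y. \<phi> y * g y) \<in> borel_measurable M" using assms(1,2) by measurable
  show "AE x in M. norm (\<phi> x * g x) \<le> norm (B * g x)"
  proof (rule AE_I2)
    fix x assume "x \<in> space M"
    then have "\<bar>\<phi> x\<bar> \<le> \<bar>B\<bar>" using assms(3) by force
    then show "norm (\<phi> x * g x) \<le> norm (B * g x)"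
      by (simp add: abs_mult mult_right_mono)
  qed
qed

lemma PH_bound: "y \<in> space M \<Longrightarrow> y' \<in> space M \<Longrightarrow> \<bar>\<Psi> y y' * Hv lt a b\<bar> \<le> 1"
  using Psi_range[of y y'] Hv_range[of lt a b]
  by (auto simp: abs_mult intro: mult_le_one)

lemma PH_nonneg: "y \<in> space M \<Longrightarrow> y' \<in> space M \<Longrightarrow> 0 \<le> \<Psi> y y' * Hv lt a b"
  using Psi_range[of y y'] Hv_range[of lt a b] by auto

lemma PHg_nonneg: "y \<in> space M \<Longrightarrow> y' \<in> space M \<Longrightarrow> 0 \<le> g y' \<Longrightarrow> 0 \<le> \<Psi> y y' * Hv lt a b * g y'"
  using PH_nonneg[of y y' a b] by simp

lemma int_PH:
  assumes "integrable M g" "y \<in> space M"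
  shows "integrable M (\<lambda>y'. \<Psi> y y' * Hv lt y y' * g y')"
    "integrable M (\<lambda>y'. \<Psi> y y' * Hv lt y' y * g y')"
    "integrable M (\<lambda>y'. \<Psi> y' y * Hv lt y y' * g y')"
    "integrable M (\<lambda>y'. \<Psi> y' y * Hv lt y' y * g y')"
  using assms by (auto intro!: integrable_bmult[where B=1] PH_bound)

lemma f0_int: "integrable M f0" using f0_dens by (simp add: prob_density_def)

context
  fixes f assumes dens: "prob_density M f" and pos: "\<And>y. y \<in> space M \<Longrightarrow> 0 < f y"
begin

lemma f_meas[measurable]: "f \<in> borel_measurable M"
  and f_int: "integrable M f" and f_one: "(\<integral>y. f y \<partial>M) = 1"
  using dens by (auto simp: prob_density_def)

lemma f_nn: "y \<in> space M \<Longrightarrow> 0 \<le> f y" using pos[of y] by simp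

lemma hplus_bounds: assumes "y \<in> space M" shows "0 \<le> hplus M \<Psi> lt f y" "hplus M \<Psi> lt f y \<le> 1"
proof -
  show "0 \<le> hplus M \<Psi> lt f y" unfolding hplus_def
    using assms pos by (intro Bochner_Integration.integral_nonneg PHg_nonneg) (auto intro: less_imp_le)
  have "hplus M \<Psi> lt f y \<le> (\<integral>y'. f y' \<partial>M)" unfolding hplus_def
  proof (intro Bochner_Integration.integral_mono int_PH f_int assms)
    fix y' assume y': "y' \<in> space M"
    have "0 \<le> f y'" using pos[OF y'] by simp
    moreover have "\<Psi> y y' * Hv lt y y' \<le> 1" using PH_bound[OF assms y', of y y'] by simp
    moreover have "0 \<le> \<Psi> y y' * Hv lt y y'" using PH_nonneg[OF assms y'] by simp
    ultimately show "\<Psi> y y' * Hv lt y y' * f y' \<le> f y'" by (metis mult_left_le_one_le)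
  qed
  then show "hplus M \<Psi> lt f y \<le> 1" using f_one by simp
qed

lemma hminus_bounds: assumes "y \<in> space M" shows "0 \<le> hminus M \<Psi> lt f y" "hminus M \<Psi> lt f y \<le> 1"
proof -
  show "0 \<le> hminus M \<Psi> lt f y" unfolding hminus_def
    using assms pos by (intro Bochner_Integration.integral_nonneg PHg_nonneg) (auto intro: less_imp_le)
  have "hminus M \<Psi> lt f y \<le> (\<integral>y'. f y' \<partial>M)" unfolding hminus_def
  proof (intro Bochner_Integration.integral_mono int_PH f_int assms)
    fix y' assume y': "y' \<in> space M"
    have "0 \<le> f y'" using pos[OF y'] by simp
    moreover have "\<Psi> y y' * Hv lt y' y \<le> 1" using PH_bound[OF assms y', of y' y] by simp
    moreover have "0 \<le> \<Psi> y y' * Hv lt y' y" using PH_nonneg[OF assms y'] by simp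
    ultimately show "\<Psi> y y' * Hv lt y' y * f y' \<le> f y'" by (metis mult_left_le_one_le)
  qed
  then show "hminus M \<Psi> lt f y \<le> 1" using f_one by simp
qed

lemma hplus_pos: assumes y: "y \<in> space M" shows "0 < hplus M \<Psi> lt f y"
proof (rule ccontr)
  assume "\<not> 0 < hplus M \<Psi> lt f y"
  with hplus_bounds[OF y] have "hplus M \<Psi> lt f y = 0" by simp
  then have "AE y' in M. \<Psi> y y' * Hv lt y y' * f y' = 0"
    unfolding hplus_def using y pos
    by (subst (asm) integral_nonneg_eq_0_iff_AE)
       (auto intro!: int_PH f_int AE_I2 PHg_nonneg f_nn)
  from this AE_space have "AE y' in M. \<Psi> y y' * Hv lt y y' * f0 y' = 0"
    by eventually_elim (use pos in force)
  then have "hplus M \<Psi> lt f0 y = (\<integral>y'. 0 \<partial>M)"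
    unfolding hplus_def by (intro integral_cong_AE) (use y in auto)
  then have "hplus M \<Psi> lt f0 y = 0" by simp
  with h0_pos[OF y] show False by simp
qed


abbreviation "cc yo \<equiv> hplus M \<Psi> lt f yo * f yo / hplus M \<Psi> lt f0 yo"
abbreviation "kk y yo \<equiv> \<Psi> y yo * Hv lt yo y * f0 y * cc yo"
abbreviation "LL y \<equiv> ln (f y / f0 y) + 1"
abbreviation "mut y \<equiv> mutation M (gibbs_kernel M \<Psi> lt f0) (\<lambda>yo. hplus M \<Psi> lt f yo * f yo) y"

lemma mut_eq: "mut y = (\<integral>yo. kk y yo \<partial>M)"
  unfolding mutation_def gibbs_kernel_def by (rule Bochner_Integration.integral_cong) (simp_all add: mult_ac)

lemma mut_meas[measurable]: "(\<lambda>y. mut y) \<in> borel_measurable M"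
  unfolding mut_eq by measurable

lemma kk_nn: "y \<in> space M \<Longrightarrow> yo \<in> space M \<Longrightarrow> 0 \<le> kk y yo"
  using Psi_range[of y yo] Hv_range[of lt yo y] f0_pos[of y] hplus_bounds[of yo] f_nn[of yo] h0_pos[of yo]
  by (intro mult_nonneg_nonneg divide_nonneg_pos) auto

lemma mut_nn: "y \<in> space M \<Longrightarrow> 0 \<le> mut y"
  unfolding mut_eq by (intro Bochner_Integration.integral_nonneg kk_nn)

lemma q_int: "yo \<in> space M \<Longrightarrow> (\<integral>y. \<Psi> y yo * Hv lt yo y * f0 y \<partial>M) = hplus M \<Psi> lt f0 yo"
  unfolding hplus_def by (rule Bochner_Integration.integral_cong) (auto simp: Psi_sym)

lemma qu_int: "yo \<in> space M \<Longrightarrow> (\<integral>y. \<Psi> y yo * Hv lt yo y * f y \<partial>M) = hplus M \<Psi> lt f yo"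
  unfolding hplus_def by (rule Bochner_Integration.integral_cong) (auto simp: Psi_sym)

lemma kk_prod: "integrable (M \<Otimes>\<^sub>M M) (\<lambda>(yo, y). kk y yo)"
proof (rule P.Fubini_integrable)
  show "(\<lambda>(yo, y). kk y yo) \<in> borel_measurable (M \<Otimes>\<^sub>M M)" by measurable
  have A: "integrable M (\<lambda>yo. hplus M \<Psi> lt f yo * f yo)"
    using hplus_bounds by (intro integrable_bmult[where B=1] f_int) auto
  have B: "(\<integral>y. norm (kk y yo) \<partial>M) = hplus M \<Psi> lt f yo * f yo" if yo: "yo \<in> space M" for yo
  proof -
    have "(\<integral>y. norm (kk y yo) \<partial>M) = (\<integral>y. \<Psi> y yo * Hv lt yo y * f0 y \<partial>M) * cc yo"
    proof (subst integral_mult_left_zero[symmetric], intro Bochner_Integration.integral_cong refl)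
      fix y assume y: "y \<in> space M"
      show "norm (kk y yo) = \<Psi> y yo * Hv lt yo y * f0 y * cc yo"
        unfolding real_norm_def by (rule abs_of_nonneg[OF kk_nn[OF y yo]])
    qed
    also have "\<dots> = hplus M \<Psi> lt f yo * f yo" using q_int[OF yo] h0_pos[OF yo] by simp
    finally show ?thesis .
  qed
  show "integrable M (\<lambda>yo. \<integral>y. norm ((\<lambda>(yo, y). kk y yo) (yo, y)) \<partial>M)"
    by (rule integrable_cong_imp[OF A]) (simp only: prod.case B)
  show "AE yo in M. integrable M (\<lambda>y. (\<lambda>(yo, y). kk y yo) (yo, y))"
  proof (intro AE_I2)
    fix yo assume yo: "yo \<in> space M"
    have "integrable M (\<lambda>y. \<Psi> y yo * Hv lt yo y * f0 y)" using int_PH(3)[OF f0_int yo] .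
    then show "integrable M (\<lambda>y. (\<lambda>(yo, y). kk y yo) (yo, y))"
      unfolding prod.case by (rule integrable_mult_left)
  qed
qed


lemma kk_prod2: "integrable (M \<Otimes>\<^sub>M M) (\<lambda>(y, yo). kk y yo)"
  using P.integrable_product_swap[OF kk_prod] by (simp add: case_prod_beta')

lemma AE_kk: "AE y in M. integrable M (\<lambda>yo. kk y yo)"
  using P.AE_integrable_fst[where f="\<lambda>y yo. kk y yo", OF kk_prod2] .

lemma LL_meas[measurable]: "LL \<in> borel_measurable M" by measurable

lemma G1_prod:
  assumes mL: "integrable M (\<lambda>y. mut y * LL y)"
  shows "integrable (M \<Otimes>\<^sub>M M) (\<lambda>(y, yo). kk y yo * LL y)"
proof (rule P.Fubini_integrable)
  show "(\<lambda>(y, yo). kk y yo * LL y) \<in> borel_measurable (M \<Otimes>\<^sub>M M)" by measurable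
  have B: "(\<integral>yo. norm (kk y yo * LL y) \<partial>M) = \<bar>mut y * LL y\<bar>" if y: "y \<in> space M" for y
  proof -
    have "(\<integral>yo. norm (kk y yo * LL y) \<partial>M) = (\<integral>yo. kk y yo \<partial>M) * \<bar>LL y\<bar>"
    proof (subst integral_mult_left_zero[symmetric], intro Bochner_Integration.integral_cong refl)
      fix yo assume yo: "yo \<in> space M"
      show "norm (kk y yo * LL y) = kk y yo * \<bar>LL y\<bar>"
        by (simp only: real_norm_def abs_mult[of "kk y yo" "LL y"] abs_of_nonneg[OF kk_nn[OF y yo]])
    qed
    also have "\<dots> = \<bar>mut y * LL y\<bar>" using mut_nn[OF y] unfolding mut_eq by (simp add: abs_mult)
    finally show ?thesis .
  qed
  show "integrable M (\<lambda>y. \<integral>yo. norm ((\<lambda>(y, yo). kk y yo * LL y) (y, yo)) \<partial>M)"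
    by (rule integrable_cong_imp[OF integrable_abs[OF mL]]) (simp only: prod.case B)
  show "AE y in M. integrable M (\<lambda>yo. (\<lambda>(y, yo). kk y yo * LL y) (y, yo))"
    using AE_kk by eventually_elim (simp only: prod.case, rule integrable_mult_left)
qed

lemma G2_prod:
  assumes phi: "integrable M \<phi>"
  shows "integrable (M \<Otimes>\<^sub>M M) (\<lambda>(y, y'). \<Psi> y y' * Hv lt y' y * f y' * \<phi> y)"
proof (rule P.Fubini_integrable)
  have [measurable]: "\<phi> \<in> borel_measurable M" using phi by (rule borel_measurable_integrable)
  show "(\<lambda>(y, y'). \<Psi> y y' * Hv lt y' y * f y' * \<phi> y) \<in> borel_measurable (M \<Otimes>\<^sub>M M)" by measurable
  have B: "(\<integral>y'. norm (\<Psi> y y' * Hv lt y' y * f y' * \<phi> y) \<partial>M) = hminus M \<Psi> lt f y * \<bar>\<phi> y\<bar>"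
    if y: "y \<in> space M" for y
  proof -
    have "(\<integral>y'. norm (\<Psi> y y' * Hv lt y' y * f y' * \<phi> y) \<partial>M) = (\<integral>y'. \<Psi> y y' * Hv lt y' y * f y' \<partial>M) * \<bar>\<phi> y\<bar>"
    proof (subst integral_mult_left_zero[symmetric], intro Bochner_Integration.integral_cong refl)
      fix y' assume y': "y' \<in> space M"
      show "norm (\<Psi> y y' * Hv lt y' y * f y' * \<phi> y) = \<Psi> y y' * Hv lt y' y * f y' * \<bar>\<phi> y\<bar>"
        by (simp only: real_norm_def abs_mult[of "\<Psi> y y' * Hv lt y' y * f y'" "\<phi> y"]
           abs_of_nonneg[OF PHg_nonneg[OF y y', of f y' y, OF f_nn[OF y']]])
    qed
    then show ?thesis unfolding hminus_def .
  qed
  have A: "integrable M (\<lambda>y. hminus M \<Psi> lt f y * \<bar>\<phi> y\<bar>)"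
    using hminus_bounds phi by (intro integrable_bmult[where B=1]) auto
  show "integrable M (\<lambda>y. \<integral>y'. norm ((\<lambda>(y, y'). \<Psi> y y' * Hv lt y' y * f y' * \<phi> y) (y, y')) \<partial>M)"
    by (rule integrable_cong_imp[OF A]) (simp only: prod.case B)
  show "AE y in M. integrable M (\<lambda>y'. (\<lambda>(y, y'). \<Psi> y y' * Hv lt y' y * f y' * \<phi> y) (y, y'))"
  proof (rule AE_I2)
    fix y assume y: "y \<in> space M"
    show "integrable M (\<lambda>y'. (\<lambda>(y, y'). \<Psi> y y' * Hv lt y' y * f y' * \<phi> y) (y, y'))"
      unfolding prod.case by (rule integrable_mult_left, rule int_PH(2)[OF f_int y])
  qed
qed

lemma pw:
  assumes yo: "yo \<in> space M"
    and i1: "integrable M (\<lambda>y. kk y yo * LL y)"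
    and i2: "integrable M (\<lambda>y. \<Psi> y yo * Hv lt yo y * f yo * (f y * LL y))"
  shows "(\<integral>y. kk y yo * LL y \<partial>M) \<le> (\<integral>y. \<Psi> y yo * Hv lt yo y * f yo * (f y * LL y) \<partial>M)"
proof -
  define q where "q y = \<Psi> y yo * Hv lt yo y * f0 y" for y
  define u where "u y = f y / f0 y" for y
  define m where "m = hplus M \<Psi> lt f yo / hplus M \<Psi> lt f0 yo"
  have hp: "0 < hplus M \<Psi> lt f yo" by (rule hplus_pos[OF yo])
  have h0: "0 < hplus M \<Psi> lt f0 yo" by (rule h0_pos[OF yo])
  have m: "0 < m" unfolding m_def using hp h0 by simp
  have fyo: "0 < f yo" by (rule pos[OF yo])
  have cc: "cc yo = f yo * m" unfolding m_def by simp
  have e1: "kk y yo * LL y = cc yo * (q y * (ln (u y) + 1))" for y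
    unfolding q_def u_def by (simp add: mult_ac)
  have e2: "\<Psi> y yo * Hv lt yo y * f yo * (f y * LL y) = f yo * (q y * u y * (ln (u y) + 1))"
    if y: "y \<in> space M" for y
    unfolding q_def u_def using f0_pos[OF y] by (simp add: field_simps)
  have ccnz: "cc yo \<noteq> 0" using hp h0 fyo by simp
  have i3: "integrable M (\<lambda>y. q y * (ln (u y) + 1))"
  proof -
    have "integrable M (\<lambda>y. cc yo * (q y * (ln (u y) + 1)))" using i1 unfolding e1 .
    then have "integrable M (\<lambda>y. inverse (cc yo) * (cc yo * (q y * (ln (u y) + 1))))"
      by (rule integrable_mult_right)
    then show ?thesis
      by (rule integrable_cong_imp)
         (simp only: mult.assoc[symmetric] left_inverse[OF ccnz] mult_1_left)
  qed
  have i4: "integrable M (\<lambda>y. q y * u y * (ln (u y) + 1))"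
  proof -
    have "integrable M (\<lambda>y. f yo * (q y * u y * (ln (u y) + 1)))"
      by (rule integrable_cong_imp[OF i2]) (simp add: e2)
    then show ?thesis using fyo by simp
  qed
  have qi: "integrable M q" unfolding q_def by (rule int_PH(3)[OF f0_int yo])
  have que: "q y * u y = \<Psi> y yo * Hv lt yo y * f y" if y: "y \<in> space M" for y
    unfolding q_def u_def using f0_pos[OF y] by simp
  have qui: "integrable M (\<lambda>y. q y * u y)"
    by (rule integrable_cong_imp[OF int_PH(3)[OF f_int yo]]) (rule que)
  have eq1: "(\<integral>y. q y \<partial>M) = hplus M \<Psi> lt f0 yo" unfolding q_def by (rule q_int[OF yo])
  have eq2: "(\<integral>y. q y * u y \<partial>M) = m * hplus M \<Psi> lt f0 yo"
  proof -
    have "(\<integral>y. q y * u y \<partial>M) = (\<integral>y. \<Psi> y yo * Hv lt yo y * f y \<partial>M)"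
      by (rule Bochner_Integration.integral_cong[OF refl que])
    also have "\<dots> = hplus M \<Psi> lt f yo" by (rule qu_int[OF yo])
    finally show ?thesis unfolding m_def using h0 by simp
  qed
  have q_nn: "0 \<le> q y" if y: "y \<in> space M" for y
    unfolding q_def using PH_nonneg[OF y yo, of yo y] f0_pos[OF y] by simp
  have u_pos: "0 < u y" if y: "y \<in> space M" for y
    unfolding u_def using f0_pos[OF y] pos[OF y] by simp
  have C: "m * (\<integral>y. q y * (ln (u y) + 1) \<partial>M) \<le> (\<integral>y. q y * u y * (ln (u y) + 1) \<partial>M)"
    by (rule cheb[OF q_nn u_pos qi qui i3 i4 eq1 eq2 m])
  have "(\<integral>y. kk y yo * LL y \<partial>M) = (\<integral>y. cc yo * (q y * (ln (u y) + 1)) \<partial>M)"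
    by (rule Bochner_Integration.integral_cong[OF refl e1])
  also have "\<dots> = cc yo * (\<integral>y. q y * (ln (u y) + 1) \<partial>M)"
    by (rule integral_mult_right_zero)
  also have "\<dots> = f yo * (m * (\<integral>y. q y * (ln (u y) + 1) \<partial>M))"
    unfolding cc by simp
  also have "\<dots> \<le> f yo * (\<integral>y. q y * u y * (ln (u y) + 1) \<partial>M)"
    using C fyo by (intro mult_left_mono) auto
  also have "\<dots> = (\<integral>y. \<Psi> y yo * Hv lt yo y * f yo * (f y * LL y) \<partial>M)"
    by (subst integral_mult_right_zero[symmetric]) (rule Bochner_Integration.integral_cong[OF refl], simp add: e2)
  finally show ?thesis .
qed


lemma ineq:
  assumes mL: "integrable M (\<lambda>y. mut y * LL y)"
    and fL: "integrable M (\<lambda>y. f y * ln (f y / f0 y))"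
  shows "(\<integral>y. (mut y - hminus M \<Psi> lt f y * f y) * LL y \<partial>M) \<le> 0"
proof -
  have phi: "integrable M (\<lambda>y. f y * LL y)"
    by (rule integrable_cong_imp[OF Bochner_Integration.integrable_add[OF fL f_int]])
       (simp add: algebra_simps)
  have hmL: "integrable M (\<lambda>y. hminus M \<Psi> lt f y * (f y * LL y))"
    using hminus_bounds by (intro integrable_bmult[where B=1] phi) auto
  note G1 = G1_prod[OF mL]
  note G2 = G2_prod[OF phi]
  have eq1: "(\<integral>y. mut y * LL y \<partial>M) = (\<integral>yo. \<integral>y. kk y yo * LL y \<partial>M \<partial>M)"
  proof -
    have "(\<integral>y. mut y * LL y \<partial>M) = (\<integral>y. \<integral>yo. kk y yo * LL y \<partial>M \<partial>M)"
      unfolding mut_eq by (simp only: integral_mult_left_zero)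
    also have "\<dots> = (\<integral>yo. \<integral>y. kk y yo * LL y \<partial>M \<partial>M)"
      using P.Fubini_integral[where f="\<lambda>y yo. kk y yo * LL y", OF G1] by simp
    finally show ?thesis .
  qed
  have eq2: "(\<integral>y. hminus M \<Psi> lt f y * (f y * LL y) \<partial>M)
      = (\<integral>yo. \<integral>y. \<Psi> y yo * Hv lt yo y * f yo * (f y * LL y) \<partial>M \<partial>M)"
  proof -
    have "(\<integral>y. hminus M \<Psi> lt f y * (f y * LL y) \<partial>M)
        = (\<integral>y. \<integral>yo. \<Psi> y yo * Hv lt yo y * f yo * (f y * LL y) \<partial>M \<partial>M)"
      unfolding hminus_def by simp
    also have "\<dots> = (\<integral>yo. \<integral>y. \<Psi> y yo * Hv lt yo y * f yo * (f y * LL y) \<partial>M \<partial>M)"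
      using P.Fubini_integral[where f="\<lambda>y yo. \<Psi> y yo * Hv lt yo y * f yo * (f y * LL y)", OF G2]
      by simp
    finally show ?thesis .
  qed
  have int1: "integrable M (\<lambda>yo. \<integral>y. kk y yo * LL y \<partial>M)"
    using P.integrable_snd[where f="\<lambda>y yo. kk y yo * LL y", OF G1] .
  have int2: "integrable M (\<lambda>yo. \<integral>y. \<Psi> y yo * Hv lt yo y * f yo * (f y * LL y) \<partial>M)"
    using P.integrable_snd[where f="\<lambda>y yo. \<Psi> y yo * Hv lt yo y * f yo * (f y * LL y)", OF G2] .
  have AE1: "AE yo in M. integrable M (\<lambda>y. kk y yo * LL y)"
    using P.AE_integrable_snd[where f="\<lambda>y yo. kk y yo * LL y", OF G1] .
  have AE2: "AE yo in M. integrable M (\<lambda>y. \<Psi> y yo * Hv lt yo y * f yo * (f y * LL y))"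
    using P.AE_integrable_snd[where f="\<lambda>y yo. \<Psi> y yo * Hv lt yo y * f yo * (f y * LL y)", OF G2] .
  have le: "(\<integral>yo. \<integral>y. kk y yo * LL y \<partial>M \<partial>M)
      \<le> (\<integral>yo. \<integral>y. \<Psi> y yo * Hv lt yo y * f yo * (f y * LL y) \<partial>M \<partial>M)"
  proof (rule integral_mono_AE[OF int1 int2])
    from AE1 AE2 AE_space[of M]
    show "AE yo in M. (\<integral>y. kk y yo * LL y \<partial>M) \<le> (\<integral>y. \<Psi> y yo * Hv lt yo y * f yo * (f y * LL y) \<partial>M)"
      by eventually_elim (rule pw)
  qed
  have "(\<integral>y. (mut y - hminus M \<Psi> lt f y * f y) * LL y \<partial>M)
      = (\<integral>y. mut y * LL y - hminus M \<Psi> lt f y * (f y * LL y) \<partial>M)"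
    by (simp add: algebra_simps)
  also have "\<dots> = (\<integral>y. mut y * LL y \<partial>M) - (\<integral>y. hminus M \<Psi> lt f y * (f y * LL y) \<partial>M)"
    by (rule Bochner_Integration.integral_diff[OF mL hmL])
  finally show ?thesis using le eq1 eq2 by simp
qed


lemma rhs_meas: "(\<lambda>y. evol_rhs M \<Psi> lt f0 \<gamma> f y * LL y) \<in> borel_measurable M"
  unfolding evol_rhs_def by measurable

lemma ineq_rhs:
  assumes gam: "0 < \<gamma>"
    and rL: "integrable M (\<lambda>y. evol_rhs M \<Psi> lt f0 \<gamma> f y * LL y)"
    and fL: "integrable M (\<lambda>y. f y * ln (f y / f0 y))"
  shows "(\<integral>y. evol_rhs M \<Psi> lt f0 \<gamma> f y * LL y \<partial>M) \<le> 0"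
proof -
  have phi: "integrable M (\<lambda>y. f y * LL y)"
    by (rule integrable_cong_imp[OF Bochner_Integration.integrable_add[OF fL f_int]])
       (simp add: algebra_simps)
  have hmL: "integrable M (\<lambda>y. hminus M \<Psi> lt f y * (f y * LL y))"
    using hminus_bounds by (intro integrable_bmult[where B=1] phi) auto
  have mL: "integrable M (\<lambda>y. mut y * LL y)"
  proof (rule integrable_cong_imp[OF Bochner_Integration.integrable_add[OF integrable_mult_right[of "1/\<gamma>", OF rL] hmL]])
    fix y show "mut y * LL y = 1 / \<gamma> * (evol_rhs M \<Psi> lt f0 \<gamma> f y * LL y) + hminus M \<Psi> lt f y * (f y * LL y)"
      unfolding evol_rhs_def using gam by (simp add: field_simps)
  qed
  have "(\<integral>y. evol_rhs M \<Psi> lt f0 \<gamma> f y * LL y \<partial>M) = \<gamma> * (\<integral>y. (mut y - hminus M \<Psi> lt f y * f y) * LL y \<partial>M)"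
    unfolding evol_rhs_def by (simp add: mult.assoc)
  also have "\<dots> \<le> 0" using ineq[OF mL fL] gam by (simp add: mult_nonneg_nonpos)
  finally show ?thesis .
qed

end

lemma f0_equil: assumes y: "y \<in> space M" shows "evol_rhs M \<Psi> lt f0 \<gamma> f0 y = 0"
proof -
  have "mutation M (gibbs_kernel M \<Psi> lt f0) (\<lambda>yo. hplus M \<Psi> lt f0 yo * f0 yo) y
      = (\<integral>yo. f0 y * (\<Psi> y yo * Hv lt yo y * f0 yo) \<partial>M)"
    unfolding mutation_def gibbs_kernel_def
  proof (rule Bochner_Integration.integral_cong[OF refl])
    fix yo assume yo: "yo \<in> space M"
    show "f0 y * \<Psi> y yo / hplus M \<Psi> lt f0 yo * Hv lt yo y * (hplus M \<Psi> lt f0 yo * f0 yo)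
        = f0 y * (\<Psi> y yo * Hv lt yo y * f0 yo)"
      using h0_pos[OF yo] by (simp add: field_simps)
  qed
  also have "\<dots> = f0 y * hminus M \<Psi> lt f0 y" unfolding hminus_def by simp
  finally show ?thesis unfolding evol_rhs_def by (simp add: mult.commute)
qed

lemma entropy_f0: "entropy M f0 C0 f0 = C0"
proof -
  have "(\<lambda>y. f0 y * ln (f0 y / f0 y)) = (\<lambda>y. 0)" 
  proof
    fix y show "f0 y * ln (f0 y / f0 y) = 0" by (cases "f0 y = 0") simp_all
  qed
  then show ?thesis unfolding entropy_def by simp
qed

lemma gibbs_ineq: assumes g: "prob_density M g" shows "entropy M f0 C0 g \<le> entropy M f0 C0 f0"
proof -
  have gm[measurable]: "g \<in> borel_measurable M" and gi: "integrable M g" and g1: "(\<integral>y. g y \<partial>M) = 1"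
    and gnn: "\<And>y. y \<in> space M \<Longrightarrow> 0 \<le> g y"
    using g unfolding prob_density_def by blast+
  have "0 \<le> (\<integral>y. g y * ln (g y / f0 y) \<partial>M)"
  proof (cases "integrable M (\<lambda>y. g y * ln (g y / f0 y))")
    case True
    have f01: "(\<integral>y. f0 y \<partial>M) = 1" using f0_dens by (simp add: prob_density_def)
    have "0 = (\<integral>y. g y - f0 y \<partial>M)"
      by (subst Bochner_Integration.integral_diff[OF gi f0_int]) (simp add: g1 f01)
    also have "\<dots> \<le> (\<integral>y. g y * ln (g y / f0 y) \<partial>M)"
    proof (rule Bochner_Integration.integral_mono[OF _ True])
      show "integrable M (\<lambda>y. g y - f0 y)" by (rule Bochner_Integration.integrable_diff[OF gi f0_int])
      fix y assume y: "y \<in> space M"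
      have f0y: "0 < f0 y" by (rule f0_pos[OF y])
      show "g y - f0 y \<le> g y * ln (g y / f0 y)"
      proof (cases "g y = 0")
        case True then show ?thesis using f0y by simp
      next
        case False
        then have gy: "0 < g y" using gnn[OF y] by simp
        have "ln (f0 y / g y) \<le> f0 y / g y - 1" using gy f0y by (intro ln_le_minus_one) simp
        moreover have "ln (g y / f0 y) = - ln (f0 y / g y)" using gy f0y by (simp add: ln_div)
        ultimately have "1 - f0 y / g y \<le> ln (g y / f0 y)" by simp
        then have "g y * (1 - f0 y / g y) \<le> g y * ln (g y / f0 y)" using gy by (intro mult_left_mono) auto
        moreover have "g y * (1 - f0 y / g y) = g y - f0 y" using gy by (simp add: field_simps)
        ultimately show ?thesis by linarith
      qed
    qed
    finally show ?thesis .
  next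
    case False then show ?thesis by (simp add: not_integrable_integral_eq)
  qed
  then show ?thesis unfolding entropy_f0 unfolding entropy_def by simp
qed


end


lemma deriv_integral:
  fixes F R :: "real \<Rightarrow> 'a \<Rightarrow> real" and M :: "'a measure" and g :: "'a \<Rightarrow> real"
  assumes T: "open T" "t \<in> T"
    and Fint: "\<And>s. s \<in> T \<Longrightarrow> integrable M (F s)"
    and Fder: "\<And>s y. s \<in> T \<Longrightarrow> y \<in> space M \<Longrightarrow> ((\<lambda>s. F s y) has_real_derivative R s y) (at s)"
    and gi: "integrable M g" and e: "e > 0"
    and dom: "\<And>s y. s \<in> T \<Longrightarrow> \<bar>s - t\<bar> < e \<Longrightarrow> y \<in> space M \<Longrightarrow> \<bar>R s y\<bar> \<le> g y"
  shows "((\<lambda>s. \<integral>y. F s y \<partial>M) has_real_derivative (\<integral>y. R t y \<partial>M)) (at t)"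
proof -
  obtain \<delta> where \<delta>: "\<delta> > 0" "ball t \<delta> \<subseteq> T" using open_contains_ball T by blast
  define d where "d = min \<delta> e"
  have d: "d > 0" "d \<le> e" "ball t d \<subseteq> T" using \<delta> e unfolding d_def by auto
  define DQ where "DQ s y = (F s y - F t y) / (s - t)" for s y
  have Fm: "F s \<in> borel_measurable M" if "s \<in> T" for s using Fint[OF that] by (rule borel_measurable_integrable)
  have DQm: "DQ s \<in> borel_measurable M" if "s \<in> T" for s
    unfolding DQ_def[abs_def] using Fm[OF that] Fm[OF T(2)] by measurable
  have bnd: "\<bar>DQ s y\<bar> \<le> g y" if s: "s \<in> ball t d" "s \<noteq> t" and y: "y \<in> space M" for s y
  proof -
    have inb: "x \<in> T" if "min s t \<le> x" "x \<le> max s t" for x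
    proof -
      have "dist t x < d" using that s by (auto simp: dist_real_def)
      then show ?thesis using d(3) by auto
    qed
    have "\<exists>z. z \<in> ball t d \<and> DQ s y = R z y"
    proof (cases "s < t")
      case True
      from MVT2[OF True, of "\<lambda>s. F s y" "\<lambda>s. R s y"] obtain z where
        z: "s < z" "z < t" "F t y - F s y = (t - s) * R z y"
        using inb Fder y True by force
      have "z \<in> ball t d" using z s by (auto simp: dist_real_def)
      moreover have "DQ s y = R z y" unfolding DQ_def using z True
        by (simp add: field_simps)
      ultimately show ?thesis by blast
    next
      case False
      then have st: "t < s" using s by simp
      from MVT2[OF st, of "\<lambda>s. F s y" "\<lambda>s. R s y"] obtain z where
        z: "t < z" "z < s" "F s y - F t y = (s - t) * R z y"
        using inb Fder y st by force
      have "z \<in> ball t d" using z s by (auto simp: dist_real_def)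
      moreover have "DQ s y = R z y" unfolding DQ_def using z st by simp
      ultimately show ?thesis by blast
    qed
    then obtain z where z: "z \<in> ball t d" "DQ s y = R z y" by blast
    have "\<bar>z - t\<bar> < e" using z(1) d(2) by (auto simp: dist_real_def)
    then show ?thesis using dom[of z y] z d(3) y by auto
  qed
  have lim: "((\<lambda>s. \<integral>y. DQ s y \<partial>M) \<longlongrightarrow> (\<integral>y. R t y \<partial>M)) (at t)"
    unfolding tendsto_at_iff_sequentially
  proof (intro allI impI)
    fix X :: "nat \<Rightarrow> real" assume X: "\<forall>i. X i \<in> UNIV - {t}" "X \<longlonglongrightarrow> t"
    obtain N where N: "\<And>n. n \<ge> N \<Longrightarrow> dist (X n) t < d" using X(2) d(1) unfolding lim_sequentially by blast
    define Y where "Y n = X (n + N)" for n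
    have Yb: "Y n \<in> ball t d" for n using N[of "n + N"] by (simp add: Y_def dist_commute)
    have YT: "Y n \<in> T" for n using Yb d(3) by auto
    have Yne: "Y n \<noteq> t" for n using X(1) by (simp add: Y_def)
    have Ylim: "Y \<longlonglongrightarrow> t" unfolding Y_def by (rule LIMSEQ_ignore_initial_segment[OF X(2)])
    have pl: "(\<lambda>n. DQ (Y n) y) \<longlonglongrightarrow> R t y" if y: "y \<in> space M" for y
    proof -
      have "((\<lambda>s. DQ s y) \<longlongrightarrow> R t y) (at t)"
        using Fder[OF T(2) y] unfolding has_field_derivative_iff DQ_def .
      then show ?thesis unfolding tendsto_at_iff_sequentially comp_def using Yne Ylim by blast
    qed
    have Rm: "R t \<in> borel_measurable M"
      by (rule borel_measurable_LIMSEQ_real[OF pl DQm[OF YT]])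
    have "(\<lambda>n. \<integral>y. DQ (Y n) y \<partial>M) \<longlonglongrightarrow> (\<integral>y. R t y \<partial>M)"
    proof (rule integral_dominated_convergence[OF Rm DQm[OF YT] gi])
      show "AE y in M. (\<lambda>n. DQ (Y n) y) \<longlonglongrightarrow> R t y" using pl by (intro AE_I2)
      show "AE y in M. norm (DQ (Y n) y) \<le> g y" for n using bnd[OF Yb Yne] by (intro AE_I2) simp
    qed
    then show "((\<lambda>s. \<integral>y. DQ s y \<partial>M) \<circ> X) \<longlonglongrightarrow> (\<integral>y. R t y \<partial>M)"
      unfolding Y_def comp_def by (rule LIMSEQ_offset)
  qed
  have ev: "\<forall>\<^sub>F s in at t. (\<integral>y. DQ s y \<partial>M) = ((\<integral>y. F s y \<partial>M) - (\<integral>y. F t y \<partial>M)) / (s - t)"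
    unfolding eventually_at
  proof (intro exI[of _ d] conjI ballI impI d)
    fix s assume "s \<in> UNIV" "s \<noteq> t \<and> dist s t < d"
    then have sT: "s \<in> T" using d(3) by (auto simp: dist_commute)
    show "(\<integral>y. DQ s y \<partial>M) = ((\<integral>y. F s y \<partial>M) - (\<integral>y. F t y \<partial>M)) / (s - t)"
      unfolding DQ_def integral_divide_zero
      by (simp add: Bochner_Integration.integral_diff[OF Fint[OF sT] Fint[OF T(2)]])
  qed
  show ?thesis unfolding has_field_derivative_iff
    by (rule tendsto_cong[THEN iffD1, OF ev lim])
qed



theorem theorem1:
  fixes M :: "'a measure"
    and lt :: "'a \<Rightarrow> 'a \<Rightarrow> bool"
    and \<Psi> :: "'a \<Rightarrow> 'a \<Rightarrow> real"
    and f0 :: "'a \<Rightarrow> real"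
    and C0 \<gamma> :: real
    and T :: "real set"
    and f :: "real \<Rightarrow> 'a \<Rightarrow> real"
  assumes sfin: "sigma_finite_measure M"
    and lt_asym: "\<And>y y'. y \<in> space M \<Longrightarrow> y' \<in> space M \<Longrightarrow> \<not> (lt y y' \<and> lt y' y)"
    and lt_meas: "{p \<in> space (M \<Otimes>\<^sub>M M). lt (fst p) (snd p)} \<in> sets (M \<Otimes>\<^sub>M M)"
    and Psi_meas: "(\<lambda>p. \<Psi> (fst p) (snd p)) \<in> borel_measurable (M \<Otimes>\<^sub>M M)"
    and Psi_range: "\<And>y y'. y \<in> space M \<Longrightarrow> y' \<in> space M \<Longrightarrow> 0 \<le> \<Psi> y y' \<and> \<Psi> y y' \<le> 1"
    and Psi_sym: "\<And>y y'. y \<in> space M \<Longrightarrow> y' \<in> space M \<Longrightarrow> \<Psi> y y' = \<Psi> y' y"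
    and f0_dens: "prob_density M f0"
    and f0_pos: "\<And>y. y \<in> space M \<Longrightarrow> 0 < f0 y"
    and h0_pos: "\<And>y. y \<in> space M \<Longrightarrow> 0 < hplus M \<Psi> lt f0 y"
    and gamma_pos: "0 < \<gamma>"
    and T_open: "open T" and T_int: "is_interval T"
    and f_dens: "\<And>t. t \<in> T \<Longrightarrow> prob_density M (f t)"
    and f_pos: "\<And>t y. t \<in> T \<Longrightarrow> y \<in> space M \<Longrightarrow> 0 < f t y"
    and f_evol: "\<And>t y. t \<in> T \<Longrightarrow> y \<in> space M \<Longrightarrow>
        ((\<lambda>s. f s y) has_real_derivative evol_rhs M \<Psi> lt f0 \<gamma> (f t) y) (at t)"
    and f_entr_int: "\<And>t. t \<in> T \<Longrightarrow> integrable M (\<lambda>y. f t y * ln (f t y / f0 y))"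
    and f_dom: "\<And>t. t \<in> T \<Longrightarrow> \<exists>e>0. \<exists>g. integrable M g \<and>
        (\<forall>s\<in>T. \<bar>s - t\<bar> < e \<longrightarrow> (\<forall>y\<in>space M.
           \<bar>evol_rhs M \<Psi> lt f0 \<gamma> (f s) y * (ln (f s y / f0 y) + 1)\<bar> \<le> g y))"
  shows "(\<forall>t\<in>T. \<exists>D. ((\<lambda>s. entropy M f0 C0 (f s)) has_real_derivative D) (at t) \<and> 0 \<le> D)
       \<and> mono_on T (\<lambda>s. entropy M f0 C0 (f s))
       \<and> (\<forall>g. prob_density M g \<longrightarrow> entropy M f0 C0 g \<le> entropy M f0 C0 f0)
       \<and> (\<forall>y\<in>space M. evol_rhs M \<Psi> lt f0 \<gamma> f0 y = 0)"
proof -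
  interpret G: gset M lt \<Psi> f0
    by (rule gset.intro[OF sfin lt_meas Psi_meas Psi_range Psi_sym f0_dens f0_pos h0_pos])
  define E where "E s = (\<integral>y. f s y * ln (f s y / f0 y) \<partial>M)" for s
  define R where "R s y = evol_rhs M \<Psi> lt f0 \<gamma> (f s) y * (ln (f s y / f0 y) + 1)" for s y
  have ent: "entropy M f0 C0 (f s) = - E s + C0" for s unfolding entropy_def E_def ..
  have Fder: "((\<lambda>s. f s y * ln (f s y / f0 y)) has_real_derivative R s y) (at s)"
    if s: "s \<in> T" and y: "y \<in> space M" for s y
  proof -
    let ?r = "evol_rhs M \<Psi> lt f0 \<gamma> (f s) y"
    have fs: "0 < f s y" by (rule f_pos[OF s y])
    have f0y: "0 < f0 y" by (rule f0_pos[OF y])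
    have D1: "((\<lambda>s. f s y) has_real_derivative ?r) (at s)" by (rule f_evol[OF s y])
    have D2: "((\<lambda>s. f s y / f0 y) has_real_derivative ?r / f0 y) (at s)"
      by (rule DERIV_cdivide[OF D1])
    have D3: "((\<lambda>s. ln (f s y / f0 y)) has_real_derivative inverse (f s y / f0 y) * (?r / f0 y)) (at s)"
      by (rule DERIV_chain2[OF DERIV_ln D2]) (use fs f0y in simp)
    note D4 = DERIV_mult[OF D1 D3]
    show ?thesis unfolding R_def
      by (rule DERIV_cong[OF D4]) (use fs f0y in \<open>simp add: field_simps\<close>)
  qed
  have deriv: "((\<lambda>s. entropy M f0 C0 (f s)) has_real_derivative - (\<integral>y. R t y \<partial>M)) (at t)
      \<and> (\<integral>y. R t y \<partial>M) \<le> 0" if t: "t \<in> T" for t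
  proof -
    from f_dom[OF t] obtain e g where e: "e > 0" and gi: "integrable M g"
      and H: "\<forall>s\<in>T. \<bar>s - t\<bar> < e \<longrightarrow> (\<forall>y\<in>space M.
           \<bar>evol_rhs M \<Psi> lt f0 \<gamma> (f s) y * (ln (f s y / f0 y) + 1)\<bar> \<le> g y)"
      by blast
    have dom: "\<And>s y. s \<in> T \<Longrightarrow> \<bar>s - t\<bar> < e \<Longrightarrow> y \<in> space M \<Longrightarrow> \<bar>R s y\<bar> \<le> g y"
      unfolding R_def using H by blast
    have dE: "(E has_real_derivative (\<integral>y. R t y \<partial>M)) (at t)"
      unfolding E_def[abs_def]
      by (rule deriv_integral[OF T_open t f_entr_int Fder gi e dom])
    have "((\<lambda>s. - E s + C0) has_real_derivative - (\<integral>y. R t y \<partial>M) + 0) (at t)"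
      by (intro DERIV_add DERIV_minus dE DERIV_const)
    then have A: "((\<lambda>s. entropy M f0 C0 (f s)) has_real_derivative - (\<integral>y. R t y \<partial>M)) (at t)"
      unfolding ent by simp
    have Ri: "integrable M (R t)"
    proof (rule Bochner_Integration.integrable_bound[OF gi])
      show "R t \<in> borel_measurable M" unfolding R_def[abs_def]
        by (rule G.rhs_meas[OF f_dens[OF t] f_pos[OF t]])
      show "AE x in M. norm (R t x) \<le> norm (g x)"
      proof (rule AE_I2)
        fix x assume x: "x \<in> space M"
        have "\<bar>R t x\<bar> \<le> g x" using dom[OF t _ x] e by simp
        then show "norm (R t x) \<le> norm (g x)" by simp
      qed
    qed
    have Ri': "integrable M (\<lambda>y. evol_rhs M \<Psi> lt f0 \<gamma> (f t) y * (ln (f t y / f0 y) + 1))"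
      using Ri unfolding R_def[abs_def] .
    have "(\<integral>y. R t y \<partial>M) \<le> 0" unfolding R_def
      by (rule G.ineq_rhs[OF f_dens[OF t] f_pos[OF t] gamma_pos Ri' f_entr_int[OF t]])
    with A show ?thesis by blast
  qed
  have P1: "\<forall>t\<in>T. \<exists>D. ((\<lambda>s. entropy M f0 C0 (f s)) has_real_derivative D) (at t) \<and> 0 \<le> D"
  proof
    fix t assume t: "t \<in> T"
    from deriv[OF t] show "\<exists>D. ((\<lambda>s. entropy M f0 C0 (f s)) has_real_derivative D) (at t) \<and> 0 \<le> D"
      by (intro exI[of _ "- (\<integral>y. R t y \<partial>M)"]) simp
  qed
  have P2: "mono_on T (\<lambda>s. entropy M f0 C0 (f s))"
  proof (rule mono_onI)
    fix r s assume rs: "r \<in> T" "s \<in> T" "r \<le> s"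
    show "entropy M f0 C0 (f r) \<le> entropy M f0 C0 (f s)"
    proof (rule DERIV_nonneg_imp_nondecreasing[OF rs(3)])
      fix x assume "r \<le> x" "x \<le> s"
      moreover have "\<forall>a\<in>T. \<forall>b\<in>T. \<forall>x. a \<le> x \<and> x \<le> b \<longrightarrow> x \<in> T"
        using T_int unfolding is_interval_1 .
      ultimately have "x \<in> T" using rs by blast
      then show "\<exists>y. ((\<lambda>s. entropy M f0 C0 (f s)) has_real_derivative y) (at x) \<and> 0 \<le> y"
        using P1 by blast
    qed
  qed
  have P3: "\<forall>g. prob_density M g \<longrightarrow> entropy M f0 C0 g \<le> entropy M f0 C0 f0"
    by (intro allI impI G.gibbs_ineq)
  have P4: "\<forall>y\<in>space M. evol_rhs M \<Psi> lt f0 \<gamma> f0 y = 0"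
    using G.f0_equil by blast
  show ?thesis using P1 P2 P3 P4 by blast
qed


end
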